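(* Let $T$ be a simple tree of maximum degree 3 and let $Q=Q(T,4)$ be the graph defined below. Then $Q$ covers $T^{(3)}$, and every covering projection from $Q$ to $T^{(3)}$ is 4-fold (every vertex of $T^{(3)}$ has exactly 4 preimages). Moreover, in every covering projection $f:Q\to T^{(3)}$, the image $f(u_i)$ of every relevant vertex $u_i$ of $Q$ is a semi-simple vertex of $T^{(3)}$.
   Context: A graph may contain edges, loops and semi-edges (a semi-edge is a link with exactly one end-vertex, contributing 1 to that vertex's degree). A covering projection from $G$ to $H$ is a map $f$ sending vertices to vertices and links to links such that: for every edge $e$ of $H$ with end-vertices $u,v$, $f^{-1}(e)$ is a perfect matching between $f^{-1}(u)$ and $f^{-1}(v)$; for every loop $l$ of $H$ at $u$, $f^{-1}(l)$ is a disjoint union of cycles spanning $f^{-1}(u)$; for every semi-edge $s$ of $H$ at $u$, $f^{-1}(s)$ is a disjoint union of edges and semi-edges spanning $f^{-1}(u)$. $T^{(3)}$ is the 3-regular graph obtained from $T$ by attaching $3-\deg_T(u)$ semi-edges to each vertex $u$. A vertex is semi-simple if it is incident with no loops, no multiple edges and at most one semi-edge. The graph $Q(T,4)$: take four disjoint copies of $T$, denoting by $u_i$ the copy of $u\in V_T$ in the $i$-th copy ($i\in[4]$); for every $u$ with $\deg_T u=1$ add the edges $u_1u_2,u_2u_3,u_3u_4,u_4u_1$; for every $u$ with $\deg_T u=2$ add the edges $u_1u_3$ and $u_2u_4$. A vertex $u\in V_T$ is relevant if $\deg_T u=3$, or if $\deg_T u=2$ and $u$ has a neighbor $v$ in $T$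 with $\deg_T v\ge 2$; a vertex $u_i$ of $Q$ is relevant if $u$ is relevant in $T$. *)

theory Defs
  imports Main "HOL-Library.Multiset"
begin

text \<open>A graph: a vertex set, a link set, and for every link the multiset of its
end-vertices: an edge has ends {#u,v#} with u \<noteq> v, a loop has ends {#u,u#},
a semi-edge has ends {#u#}.\<close>

record ('v, 'l) mgraph =
  verts :: "'v set"
  links :: "'l set"
  ends  :: "'l \<Rightarrow> 'v multiset"

definition wf_mgraph :: "('v, 'l) mgraph \<Rightarrow> bool" where
  "wf_mgraph G \<longleftrightarrow> finite (verts G) \<and> finite (links G) \<and>
     (\<forall>l\<in>links G. ends G l \<noteq> {#} \<and> size (ends G l) \<le> 2 \<and> set_mset (ends G l) \<subseteq> verts G)"

definition is_edge :: "('v, 'l) mgraph \<Rightarrow> 'l \<Rightarrow> bool" where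
  "is_edge G l \<longleftrightarrow> l \<in> links G \<and> (\<exists>u v. u \<noteq> v \<and> ends G l = {#u, v#})"

definition is_loop :: "('v, 'l) mgraph \<Rightarrow> 'l \<Rightarrow> bool" where
  "is_loop G l \<longleftrightarrow> l \<in> links G \<and> (\<exists>u. ends G l = {#u, u#})"

definition is_semi_edge :: "('v, 'l) mgraph \<Rightarrow> 'l \<Rightarrow> bool" where
  "is_semi_edge G l \<longleftrightarrow> l \<in> links G \<and> (\<exists>u. ends G l = {#u#})"

definition deg_in :: "('v, 'l) mgraph \<Rightarrow> 'l set \<Rightarrow> 'v \<Rightarrow> nat" where
  "deg_in G S x = (\<Sum>l\<in>S. count (ends G l) x)"

text \<open>Covering projection (fv on vertices, fl on links).
 - edge e of H with ends u,v: the preimage of e is a perfect matching between the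
   fibres of u and v (every preimage link has one end in each fibre, every vertex of
   both fibres is incident with exactly one preimage link);
 - loop at u: the preimage consists of links with both ends in the fibre of u
   (edges or loops) and is 2-regular on the fibre, i.e. a disjoint union of cycles
   spanning the fibre;
 - semi-edge at u: the preimage consists of links with all ends in the fibre of u
   and is 1-regular on the fibre, i.e. a disjoint union of edges and semi-edges
   spanning the fibre.\<close>
definition covering_projection ::
  "('v, 'l) mgraph \<Rightarrow> ('w, 'k) mgraph \<Rightarrow> ('v \<Rightarrow> 'w) \<Rightarrow> ('l \<Rightarrow> 'k) \<Rightarrow> bool" where
  "covering_projection G H fv fl \<longleftrightarrow>
     wf_mgraph G \<and> wf_mgraph H \<and>
     fv ` verts G \<subseteq> verts H \<and> fl ` links G \<subseteq> links H \<and>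
     (\<forall>e\<in>links H.
        (\<forall>u v. u \<noteq> v \<and> ends H e = {#u, v#} \<longrightarrow>
            (\<forall>l\<in>links G. fl l = e \<longrightarrow> image_mset fv (ends G l) = {#u, v#}) \<and>
            (\<forall>x\<in>verts G. fv x = u \<or> fv x = v \<longrightarrow> deg_in G {l\<in>links G. fl l = e} x = 1)) \<and>
        (\<forall>u. ends H e = {#u, u#} \<longrightarrow>
            (\<forall>l\<in>links G. fl l = e \<longrightarrow> image_mset fv (ends G l) = {#u, u#}) \<and>
            (\<forall>x\<in>verts G. fv x = u \<longrightarrow> deg_in G {l\<in>links G. fl l = e} x = 2)) \<and>
        (\<forall>u. ends H e = {#u#} \<longrightarrow>
            (\<forall>l\<in>links G. fl l = e \<longrightarrow> (\<forall>y\<in>#ends G l. fv y = u)) \<and>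
            (\<forall>x\<in>verts G. fv x = u \<longrightarrow> deg_in G {l\<in>links G. fl l = e} x = 1)))"

definition covers :: "('v, 'l) mgraph \<Rightarrow> ('w, 'k) mgraph \<Rightarrow> bool" where
  "covers G H \<longleftrightarrow> (\<exists>fv fl. covering_projection G H fv fl)"

definition semi_simple :: "('v, 'l) mgraph \<Rightarrow> 'v \<Rightarrow> bool" where
  "semi_simple H x \<longleftrightarrow>
     (\<forall>l\<in>links H. ends H l \<noteq> {#x, x#}) \<and>
     (\<forall>l1\<in>links H. \<forall>l2\<in>links H. l1 \<noteq> l2 \<and> is_edge H l1 \<and> x \<in># ends H l1
         \<longrightarrow> ends H l2 \<noteq> ends H l1) \<and>
     card {l\<in>links H. ends H l = {#x#}} \<le> 1"

definition simple_graph :: "'a set \<Rightarrow> 'a set set \<Rightarrow> bool" where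
  "simple_graph V E \<longleftrightarrow> finite V \<and> (\<forall>e\<in>E. \<exists>u v. u \<noteq> v \<and> e = {u, v} \<and> u \<in> V \<and> v \<in> V)"

definition sdeg :: "'a set set \<Rightarrow> 'a \<Rightarrow> nat" where
  "sdeg E u = card {e\<in>E. u \<in> e}"

definition connected_sg :: "'a set \<Rightarrow> 'a set set \<Rightarrow> bool" where
  "connected_sg V E \<longleftrightarrow> (\<forall>u\<in>V. \<forall>v\<in>V. (u, v) \<in> {(x, y). {x, y} \<in> E}\<^sup>*)"

definition acyclic_sg :: "'a set \<Rightarrow> 'a set set \<Rightarrow> bool" where
  "acyclic_sg V E \<longleftrightarrow> \<not> (\<exists>c. length c \<ge> 3 \<and> distinct c \<and> set c \<subseteq> V \<and>
       (\<forall>i<length c. {c ! i, c ! ((i + 1) mod length c)} \<in> E))"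

definition is_tree :: "'a set \<Rightarrow> 'a set set \<Rightarrow> bool" where
  "is_tree V E \<longleftrightarrow> simple_graph V E \<and> V \<noteq> {} \<and> connected_sg V E \<and> acyclic_sg V E"

definition T3 :: "'a set \<Rightarrow> 'a set set \<Rightarrow> ('a, 'a set + ('a \<times> nat)) mgraph" where
  "T3 V E = \<lparr> verts = V,
              links = Inl ` E \<union> Inr ` {(u, j). u \<in> V \<and> j < 3 - sdeg E u},
              ends = (\<lambda>l. case l of Inl e \<Rightarrow> mset_set e | Inr (u, j) \<Rightarrow> {#u#}) \<rparr>"

text \<open>Q(T,4): vertex u_i is the pair (u, i), i \<in> {1..4}; it is a simple graph, each
link is a 2-element set of vertices.\<close>
definition Q_links :: "'a set \<Rightarrow> 'a set set \<Rightarrow> ('a \<times> nat) set set" where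
  "Q_links V E =
     {{(u, i), (v, i)} | u v i. {u, v} \<in> E \<and> i \<in> {1..4}} \<union>
     (\<Union>u\<in>{u\<in>V. sdeg E u = 1}.
        {{(u, 1), (u, 2)}, {(u, 2), (u, 3)}, {(u, 3), (u, 4)}, {(u, 4), (u, 1)}}) \<union>
     (\<Union>u\<in>{u\<in>V. sdeg E u = 2}. {{(u, 1), (u, 3)}, {(u, 2), (u, 4)}})"

definition Q4 :: "'a set \<Rightarrow> 'a set set \<Rightarrow> ('a \<times> nat, ('a \<times> nat) set) mgraph" where
  "Q4 V E = \<lparr> verts = V \<times> {1..4}, links = Q_links V E, ends = mset_set \<rparr>"

definition relevant :: "'a set \<Rightarrow> 'a set set \<Rightarrow> 'a \<Rightarrow> bool" where
  "relevant V E u \<longleftrightarrow> u \<in> V \<and>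
     (sdeg E u = 3 \<or> (sdeg E u = 2 \<and> (\<exists>v. {u, v} \<in> E \<and> sdeg E v \<ge> 2)))"

end

theory Submission imports Defs begin

definition ext1 :: "nat \<Rightarrow> nat \<Rightarrow> bool" where
  "ext1 i j \<longleftrightarrow> (i,j) \<in> {(1,2),(2,1),(2,3),(3,2),(3,4),(4,3),(4,1),(1,4)}"
definition ext2 :: "nat \<Rightarrow> nat \<Rightarrow> bool" where
  "ext2 i j \<longleftrightarrow> (i,j) \<in> {(1,3),(3,1),(2,4),(4,2)}"
lemma e1: "ext1 i j \<longleftrightarrow> {(a,i),(a::'a,j)} \<in> {{(a, 1), (a, 2)}, {(a, 2), (a, 3)}, {(a, 3), (a, 4)}, {(a, 4), (a, 1)}}"
  by (auto simp: ext1_def doubleton_eq_iff)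
lemma e2: "ext2 i j \<longleftrightarrow> {(a,i),(a::'a,j)} \<in> {{(a, 1), (a, 3)}, {(a, 2), (a, 4)}}"
  by (auto simp: ext2_def doubleton_eq_iff)
lemma e1': "{(a,i),(b::'a,j)} \<in> {{(u, 1), (u, 2)}, {(u, 2), (u, 3)}, {(u, 3), (u, 4)}, {(u, 4), (u, 1)}} \<Longrightarrow> a = u \<and> b = u \<and> ext1 i j"
  by (auto simp: ext1_def doubleton_eq_iff)
lemma e2': "{(a,i),(b::'a,j)} \<in> {{(u, 1), (u, 3)}, {(u, 2), (u, 4)}} \<Longrightarrow> a = u \<and> b = u \<and> ext2 i j"
  by (auto simp: ext2_def doubleton_eq_iff)

lemma QL_cases:
  assumes "x \<in> Q_links V E"
  obtains (t) u v k where "x = {(u,k),(v,k)}" "{u,v} \<in> E" "k \<in> {1..4}"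
    | (e1) u where "u \<in> V" "sdeg E u = 1" "x \<in> {{(u, 1), (u, 2)}, {(u, 2), (u, 3)}, {(u, 3), (u, 4)}, {(u, 4), (u, 1)}}"
    | (e2) u where "u \<in> V" "sdeg E u = 2" "x \<in> {{(u, 1), (u, 3)}, {(u, 2), (u, 4)}}"
  using assms unfolding Q_links_def by blast

locale qtree =
  fixes V :: "'a set" and E :: "'a set set"
  assumes tree: "is_tree V E" and cardV: "card V \<ge> 2" and maxdeg: "\<forall>u\<in>V. sdeg E u \<le> 3"
begin

abbreviation "QL \<equiv> Q_links V E"

lemma sg: "simple_graph V E" and conn: "connected_sg V E" and acyc: "acyclic_sg V E" and Vne: "V \<noteq> {}"
  using tree unfolding is_tree_def by simp_all

lemma finV: "finite V" using sg unfolding simple_graph_def by simp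

lemma E_form: "e \<in> E \<Longrightarrow> \<exists>a b. a \<noteq> b \<and> e = {a,b} \<and> a \<in> V \<and> b \<in> V"
  using sg unfolding simple_graph_def by blast

lemma E_V: assumes "{a,b} \<in> E" shows "a \<in> V" "b \<in> V" "a \<noteq> b"
  using E_form[OF assms] by (auto simp: doubleton_eq_iff)



lemma QL_I1: "{u,v} \<in> E \<Longrightarrow> i \<in> {1..4} \<Longrightarrow> {(u,i),(v,i)} \<in> QL"
  unfolding Q_links_def by blast
lemma QL_I2: "u \<in> V \<Longrightarrow> sdeg E u = 1 \<Longrightarrow> x \<in> {{(u, 1), (u, 2)}, {(u, 2), (u, 3)}, {(u, 3), (u, 4)}, {(u, 4), (u, 1)}} \<Longrightarrow> x \<in> QL"
  unfolding Q_links_def by (rule UnI1, rule UnI2, rule UN_I[of u]) auto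
lemma QL_I3: "u \<in> V \<Longrightarrow> sdeg E u = 2 \<Longrightarrow> x \<in> {{(u, 1), (u, 3)}, {(u, 2), (u, 4)}} \<Longrightarrow> x \<in> QL"
  unfolding Q_links_def by (rule UnI2, rule UN_I[of u]) auto
lemma adj_iff: "{(a,i),(b,j)} \<in> QL \<longleftrightarrow>
   ((i = j \<and> {a,b} \<in> E \<and> i \<in> {1..4}) \<or>
    (a = b \<and> a \<in> V \<and> sdeg E a = 1 \<and> ext1 i j) \<or>
    (a = b \<and> a \<in> V \<and> sdeg E a = 2 \<and> ext2 i j))" (is "?L \<longleftrightarrow> ?R")
proof
  assume ?L
  then show ?R
  proof (cases rule: QL_cases)
    case (t u v k)
    then have "((a,i)=(u,k) \<and> (b,j)=(v,k)) \<or> ((a,i)=(v,k) \<and> (b,j)=(u,k))"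
      by (simp add: doubleton_eq_iff)
    then show ?thesis
    proof
      assume "(a,i)=(u,k) \<and> (b,j)=(v,k)" then show ?thesis using t by simp
    next
      assume "(a,i)=(v,k) \<and> (b,j)=(u,k)" then show ?thesis using t by (simp add: insert_commute)
    qed
  next
    case (e1 u)
    from e1(3) have "a = u \<and> b = u \<and> ext1 i j" by (rule e1')
    then show ?thesis using e1(1,2) by simp
  next
    case (e2 u)
    from e2(3) have "a = u \<and> b = u \<and> ext2 i j" by (rule e2')
    then show ?thesis using e2(1,2) by simp
  qed
next
  assume ?R
  then show ?L
  proof (elim disjE)
    assume "i = j \<and> {a,b} \<in> E \<and> i \<in> {1..4}" then show ?L using QL_I1 by blast
  next
    assume h: "a = b \<and> a \<in> V \<and> sdeg E a = 1 \<and> ext1 i j"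
    then show ?L using QL_I2[of a "{(a,i),(a,j)}"] e1[of i j a] by auto
  next
    assume h: "a = b \<and> a \<in> V \<and> sdeg E a = 2 \<and> ext2 i j"
    then show ?L using QL_I3[of a "{(a,i),(a,j)}"] e2[of i j a] by auto
  qed
qed


lemma finE: "finite E"
proof -
  have "E \<subseteq> Pow V" using E_form by blast
  then show ?thesis using finV finite_subset by blast
qed

lemma ex2: "i \<noteq> j \<Longrightarrow> i\<in>{1..4} \<Longrightarrow> j\<in>{1..4} \<Longrightarrow> \<exists>i' j'. {(u,i),(u,j)} = {(u::'a,i'),(u,j')} \<and> i' \<noteq> j' \<and> i' \<in> {1..4} \<and> j' \<in> {1..4::nat}"
  by blast

lemma QL_form: assumes "l \<in> QL"
  shows "\<exists>x y. l = {x,y} \<and> x \<noteq> y \<and> x \<in> V \<times> {1..4} \<and> y \<in> V \<times> {1..4}"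
  using assms
proof (cases rule: QL_cases)
  case (t u v k) then show ?thesis using E_V[OF t(2)] by auto
next
  case (e1 u)
  then have "\<exists>i j. l = {(u,i),(u,j)} \<and> i \<noteq> j \<and> i \<in> {1..4} \<and> j \<in> {1..4}"
    using ex2[of 1 2 u] ex2[of 2 3 u] ex2[of 3 4 u] ex2[of 4 1 u] by auto
  then show ?thesis using e1(1) by blast
next
  case (e2 u)
  then have "\<exists>i j. l = {(u,i),(u,j)} \<and> i \<noteq> j \<and> i \<in> {1..4} \<and> j \<in> {1..4}"
    using ex2[of 1 3 u] ex2[of 2 4 u] by auto
  then show ?thesis using e2(1) by blast
qed

lemma QL_sub: "l \<in> QL \<Longrightarrow> l \<subseteq> V \<times> {1..4}"
  using QL_form by blast

lemma QL_mem: assumes "l \<in> QL" "x \<in> l" shows "\<exists>y. l = {x,y} \<and> y \<noteq> x"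
  using QL_form[OF assms(1)] assms(2) by (auto simp: insert_commute)

lemma finQL: "finite QL"
proof -
  have "QL \<subseteq> Pow (V \<times> {1..4})" using QL_sub by blast
  moreover have "finite (Pow (V \<times> {1..4::nat}))" using finV by simp
  ultimately show ?thesis using finite_subset by blast
qed

lemma fin_l: "l \<in> QL \<Longrightarrow> finite l"
  using QL_form by auto

lemma adj_verts: "{x,y} \<in> QL \<Longrightarrow> x \<in> V \<times> {1..4} \<and> y \<in> V \<times> {1..4}"
  using QL_sub by blast

lemma adj_irrefl: "{x,x} \<notin> QL"
  using QL_form by (auto simp: doubleton_eq_iff)

lemma deg_in_eq: assumes "S \<subseteq> QL"
  shows "deg_in (Q4 V E) S x = card {y. {x,y} \<in> S}"
proof -
  have fS: "finite S" using assms finQL finite_subset by blast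
  have "deg_in (Q4 V E) S x = (\<Sum>l\<in>S. if x \<in> l then 1 else 0)"
    unfolding deg_in_def Q4_def
    apply simp
    apply (rule sum.cong, simp)
    using fin_l assms by (auto simp: count_mset_set)
  also have "\<dots> = card {l\<in>S. x \<in> l}"
    using fS by (simp add: sum.If_cases Int_def)
  also have "\<dots> = card {y. {x,y} \<in> S}"
  proof (rule bij_betw_same_card[symmetric])
    show "bij_betw (\<lambda>y. {x,y}) {y. {x,y} \<in> S} {l\<in>S. x \<in> l}"
      unfolding bij_betw_def
    proof
      show "inj_on (\<lambda>y. {x,y}) {y. {x,y} \<in> S}"
        by (auto simp: inj_on_def doubleton_eq_iff)
      show "(\<lambda>y. {x,y}) ` {y. {x,y} \<in> S} = {l\<in>S. x \<in> l}"
      proof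
        show "(\<lambda>y. {x,y}) ` {y. {x,y} \<in> S} \<subseteq> {l\<in>S. x \<in> l}" by auto
        show "{l\<in>S. x \<in> l} \<subseteq> (\<lambda>y. {x,y}) ` {y. {x,y} \<in> S}"
        proof
          fix l assume "l \<in> {l\<in>S. x \<in> l}"
          then have "l \<in> S" "x \<in> l" by auto
          then obtain y where "l = {x,y}" using QL_mem assms by blast
          then show "l \<in> (\<lambda>y. {x,y}) ` {y. {x,y} \<in> S}" using \<open>l \<in> S\<close> by blast
        qed
      qed
    qed
  qed
  finally show ?thesis .
qed

lemma E_single: "{a} \<notin> E" using E_V[of a a] by auto

lemma par_same: assumes "{(a,i),(b,j)} \<in> QL" "sdeg E a \<noteq> 1" shows "i mod 2 = j mod 2"
  using assms unfolding adj_iff ext2_def by auto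

lemma par_diff: assumes "{(a,i),(a,j)} \<in> QL" "sdeg E a = 1" shows "i mod 2 \<noteq> j mod 2"
  using assms E_single unfolding adj_iff ext1_def by auto

lemma no_tri: assumes "{a,b} \<in> E" "{b,c} \<in> E" "{a,c} \<in> E" shows False
proof -
  have d: "a \<noteq> b" "b \<noteq> c" "a \<noteq> c" using assms E_V by blast+
  have "\<forall>i<length [a,b,c]. {[a,b,c] ! i, [a,b,c] ! ((i + 1) mod length [a,b,c])} \<in> E"
  proof (intro allI impI)
    fix i assume "i < length [a,b,c]"
    then have "i = 0 \<or> i = 1 \<or> i = 2" by auto
    then show "{[a,b,c] ! i, [a,b,c] ! ((i + 1) mod length [a,b,c])} \<in> E"
      using assms by (auto simp: insert_commute)
  qed
  moreover have "set [a,b,c] \<subseteq> V" using assms E_V by auto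
  moreover have "distinct [a,b,c]" using d by auto
  moreover have "length [a,b,c] \<ge> 3" by simp
  ultimately show False using acyc unfolding acyclic_sg_def by blast
qed

lemma no_sq: assumes "{a,b} \<in> E" "{b,c} \<in> E" "{c,d} \<in> E" "{d,a} \<in> E" "a \<noteq> c" "b \<noteq> d" shows False
proof -
  have d: "a \<noteq> b" "b \<noteq> c" "c \<noteq> d" "d \<noteq> a" using assms E_V by blast+
  have "\<forall>i<length [a,b,c,d]. {[a,b,c,d] ! i, [a,b,c,d] ! ((i + 1) mod length [a,b,c,d])} \<in> E"
  proof (intro allI impI)
    fix i assume "i < length [a,b,c,d]"
    then have "i = 0 \<or> i = 1 \<or> i = 2 \<or> i = 3" by auto
    then show "{[a,b,c,d] ! i, [a,b,c,d] ! ((i + 1) mod length [a,b,c,d])} \<in> E"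
      using assms by (auto simp: insert_commute)
  qed
  moreover have "set [a,b,c,d] \<subseteq> V" using assms E_V by auto
  moreover have "distinct [a,b,c,d]" using d assms(5,6) by auto
  moreover have "length [a,b,c,d] \<ge> 3" by simp
  ultimately show False using acyc unfolding acyclic_sg_def by blast
qed

lemma conn_induct:
  assumes "y0 \<in> V" "P y0" "\<And>y z. P y \<Longrightarrow> {y,z} \<in> E \<Longrightarrow> P z" "z \<in> V"
  shows "P z"
proof -
  have "(y0, z) \<in> {(x, y). {x, y} \<in> E}\<^sup>*" using conn assms(1,4) unfolding connected_sg_def by blast
  then show ?thesis
  proof (induction rule: rtrancl_induct)
    case base then show ?case using assms(2) .
  next
    case (step y z) then show ?case using assms(3) by blast
  qed
qed

lemma sdeg_pos: assumes "u \<in> V" shows "sdeg E u \<ge> 1"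
proof -
  have "\<exists>v\<in>V. v \<noteq> u"
  proof (rule ccontr)
    assume "\<not> (\<exists>v\<in>V. v \<noteq> u)"
    then have "V \<subseteq> {u}" by blast
    then have "card V \<le> card {u}" by (rule card_mono[rotated]) simp
    then show False using cardV by simp
  qed
  then obtain v where v: "v \<in> V" "v \<noteq> u" by blast
  have r: "(u, v) \<in> {(x, y). {x, y} \<in> E}\<^sup>*" using conn assms v(1) unfolding connected_sg_def by blast
  obtain z where "(u,z) \<in> {(x, y). {x, y} \<in> E}"
    using r
  proof (cases rule: converse_rtranclE)
    case base then show ?thesis using v(2) by simp
  next
    case (step z) then show ?thesis using that by blast
  qed
  then have "{u,z} \<in> {e\<in>E. u \<in> e}" by simp
  moreover have "finite {e\<in>E. u \<in> e}" using finE by simp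
  ultimately have "card {e\<in>E. u \<in> e} > 0" by (subst card_gt_0_iff) blast
  then show ?thesis unfolding sdeg_def by simp
qed

lemma mset_pair: "a \<noteq> b \<Longrightarrow> mset_set {a,b} = {#a,b#}"
  by simp

lemma mset_pair_eq: "{#a,b#} = {#c,d#} \<Longrightarrow> {a,b} = {c,d}"
  by (metis set_mset_add_mset_insert set_mset_empty)

lemma mset_pair_eq2: "{#a,b#} = {#a,d#} \<Longrightarrow> b = d"
  by simp


lemma adj_cases: assumes "{(a,i),(b,j)} \<in> QL"
  shows "(a \<noteq> b \<and> i = j \<and> {a,b} \<in> E) \<or> (a = b \<and> i \<noteq> j \<and> ((sdeg E a = 1 \<and> ext1 i j) \<or> (sdeg E a = 2 \<and> ext2 i j)))"
proof -
  have "i \<noteq> j" if "a = b" using assms adj_irrefl that by auto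
  moreover have "a \<noteq> b" if "{a,b} \<in> E" using E_V that by blast
  ultimately show ?thesis using assms unfolding adj_iff by blast
qed

lemma ext1_par: "ext1 i j \<Longrightarrow> i mod 2 \<noteq> j mod 2" unfolding ext1_def by auto
lemma ext2_fun: "ext2 i j \<Longrightarrow> ext2 i k \<Longrightarrow> j = k" unfolding ext2_def by auto
lemma ext2_sym: "ext2 i j \<Longrightarrow> ext2 j i" unfolding ext2_def by auto

lemma q_no_tri: assumes h1: "{(a,i),(b,j)} \<in> QL" and h2: "{(b,j),(c,k)} \<in> QL" and h3: "{(a,i),(c,k)} \<in> QL" shows False
proof -
  note c1 = adj_cases[OF h1] and c2 = adj_cases[OF h2] and c3 = adj_cases[OF h3]
  show False
  proof (cases "a = b")
    case ab: True
    show False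
    proof (cases "a = c")
      case ac: True
      have "(sdeg E a = 1 \<and> ext1 i j) \<or> (sdeg E a = 2 \<and> ext2 i j)" using c1 ab by blast
      moreover have "(sdeg E a = 1 \<and> ext1 j k) \<or> (sdeg E a = 2 \<and> ext2 j k)" using c2 ab ac by blast
      moreover have "(sdeg E a = 1 \<and> ext1 i k) \<or> (sdeg E a = 2 \<and> ext2 i k)" using c3 ac by blast
      moreover have "i \<noteq> k" using c3 ac by blast
      ultimately show False using ext1_par ext2_fun ext2_sym by (smt (verit) One_nat_def Suc_1 mod2_eq_if n_not_Suc_n)
    next
      case ac: False
      have "i = k" using c3 ac by blast
      moreover have "j = k" using c2 ab ac by blast
      moreover have "i \<noteq> j" using c1 ab by blast
      ultimately show False by simp
    qed
  next
    case ab: False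
    have ij: "i = j" "{a,b} \<in> E" using c1 ab by blast+
    show False
    proof (cases "b = c")
      case bc: True
      then have "a \<noteq> c" using ab by simp
      then have "i = k" using c3 by blast
      moreover have "j \<noteq> k" using c2 bc by blast
      ultimately show False using ij by simp
    next
      case bc: False
      have jk: "j = k" "{b,c} \<in> E" using c2 bc by blast+
      show False
      proof (cases "a = c")
        case True
        then have "i \<noteq> k" using c3 by blast
        then show False using ij jk by simp
      next
        case False
        then have "{a,c} \<in> E" using c3 by blast
        then show False using no_tri ij jk by blast
      qed
    qed
  qed
qed

lemma par_diff_same: assumes "{(a,i),(b,j)} \<in> QL" "i mod 2 \<noteq> j mod 2" shows "a = b"
  using assms unfolding adj_iff ext1_def ext2_def by auto

lemma same_fst_nbrs: assumes "{(u,i),(a,j)} \<in> QL" "{(u,i),(a,k)} \<in> QL" "sdeg E u \<noteq> 1" shows "j = k"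
  using assms E_single unfolding adj_iff ext1_def ext2_def by auto

end

lemma verts_Q[simp]: "verts (Q4 V E) = V \<times> {1..4}" by (simp add: Q4_def)
lemma links_Q[simp]: "links (Q4 V E) = Q_links V E" by (simp add: Q4_def)
lemma ends_Q[simp]: "ends (Q4 V E) = mset_set" by (simp add: Q4_def)
lemma verts_H[simp]: "verts (T3 V E) = V" by (simp add: T3_def)
lemma links_H: "links (T3 V E) = Inl ` E \<union> Inr ` {(u, j). u \<in> V \<and> j < 3 - sdeg E u}" by (simp add: T3_def)
lemma ends_H_Inl[simp]: "ends (T3 V E) (Inl e) = mset_set e" by (simp add: T3_def)
lemma ends_H_Inr[simp]: "ends (T3 V E) (Inr (u,j)) = {#u#}" by (simp add: T3_def)


context qtree begin

lemma E_mset: assumes "e \<in> E" obtains a b where "a \<noteq> b" "e = {a,b}" "mset_set e = {#a,b#}"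
  using E_form[OF assms] by auto

lemma ss: assumes "w \<in> V" "sdeg E w \<ge> 2" shows "semi_simple (T3 V E) w"
  unfolding semi_simple_def
proof (intro conjI ballI impI)
  fix l assume l: "l \<in> links (T3 V E)"
  show "ends (T3 V E) l \<noteq> {#w, w#}"
  proof
    assume h: "ends (T3 V E) l = {#w, w#}"
    from l consider (i) e where "l = Inl e" "e \<in> E" | (r) u j where "l = Inr (u,j)"
      unfolding links_H by blast
    then show False
    proof cases
      case i
      obtain a b where ab: "a \<noteq> b" "mset_set e = {#a,b#}" using E_mset[OF i(2)] by metis
      then have "{#a,b#} = {#w,w#}" using h i by simp
      then have "{a,b} = {w}" using mset_pair_eq by fastforce
      then show False using ab by (simp add: doubleton_eq_iff)
    next
      case r then show False using h by simp
    qed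
  qed
next
  fix l1 l2 assume l: "l1 \<in> links (T3 V E)" "l2 \<in> links (T3 V E)"
    and h: "l1 \<noteq> l2 \<and> is_edge (T3 V E) l1 \<and> w \<in># ends (T3 V E) l1"
  then obtain u v where uv: "u \<noteq> v" "ends (T3 V E) l1 = {#u,v#}" unfolding is_edge_def by blast
  have sz: "size (ends (T3 V E) l1) = 2" using uv by simp
  from l(1) obtain e1 where e1: "l1 = Inl e1" "e1 \<in> E"
  proof (cases rule: UnE[OF l(1)[unfolded links_H]])
    case 1 then show ?thesis using that by blast
  next
    case 2 then obtain u j where "l1 = Inr (u,j)" by blast
    then show ?thesis using sz by simp
  qed
  show "ends (T3 V E) l2 \<noteq> ends (T3 V E) l1"
  proof
    assume eq: "ends (T3 V E) l2 = ends (T3 V E) l1"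
    from l(2) consider (i) e2 where "l2 = Inl e2" "e2 \<in> E" | (r) u j where "l2 = Inr (u,j)"
      unfolding links_H by blast
    then show False
    proof cases
      case i
      have f: "finite e1" "finite e2" using E_form e1(2) i(2) by blast+
      have "mset_set e2 = mset_set e1" using eq i e1 by simp
      then have "set_mset (mset_set e2) = set_mset (mset_set e1)" by simp
      then have "e2 = e1" using f by simp
      then show False using h e1 i by simp
    next
      case r then have "size (ends (T3 V E) l1) = 1" using eq by (metis ends_H_Inr size_single)
      then show False using sz by simp
    qed
  qed
next
  have "{l \<in> links (T3 V E). ends (T3 V E) l = {#w#}} \<subseteq> {Inr (w,0)}"
  proof
    fix l assume "l \<in> {l \<in> links (T3 V E). ends (T3 V E) l = {#w#}}"
    then have l: "l \<in> links (T3 V E)" "ends (T3 V E) l = {#w#}" by auto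
    from l(1) consider (i) e where "l = Inl e" "e \<in> E" | (r) u j where "l = Inr (u,j)" "j < 3 - sdeg E u"
      unfolding links_H by blast
    then show "l \<in> {Inr (w,0)}"
    proof cases
      case i
      obtain a b where ab: "a \<noteq> b" "mset_set e = {#a,b#}" using E_mset[OF i(2)] by metis
      then show ?thesis using l(2) i by simp
    next
      case r
      then have "u = w" using l(2) by simp
      then have "j = 0" using r assms(2) by simp
      then show ?thesis using r \<open>u = w\<close> by simp
    qed
  qed
  then have "card {l \<in> links (T3 V E). ends (T3 V E) l = {#w#}} \<le> card {Inr (w,0) :: 'a set + ('a \<times> nat)}"
    by (rule card_mono[rotated]) simp
  then show "card {l \<in> links (T3 V E). ends (T3 V E) l = {#w#}} \<le> 1" by simp
qed

end


context qtree begin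

definition jset :: "nat set \<Rightarrow> nat" where
  "jset S = (if S = {2,3} \<or> S = {1,4} then 1 else 0)"

definition fl0 :: "('a \<times> nat) set \<Rightarrow> 'a set + ('a \<times> nat)" where
  "fl0 l = (if card (fst ` l) = 2 then Inl (fst ` l) else Inr (the_elem (fst ` l), jset (snd ` l)))"

lemma fl0_t: "a \<noteq> b \<Longrightarrow> fl0 {(a,k),(b,k)} = Inl {a,b}"
  unfolding fl0_def by simp

lemma fl0_e: "fl0 {(a,i),(a,k)} = Inr (a, jset {i,k})"
  unfolding fl0_def by simp

lemma ext1_uniq: assumes "i \<in> {1..4}" "j < 2" shows "\<exists>k0. {k. ext1 i k \<and> jset {i,k} = j} = {k0}"
proof -
  have "i = 1 \<or> i = 2 \<or> i = 3 \<or> i = 4" using assms by auto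
  moreover have "j = 0 \<or> j = 1" using assms by auto
  ultimately show ?thesis
    by (elim disjE) (simp_all add: ext1_def jset_def doubleton_eq_iff, auto)
qed

lemma ext2_uniq: assumes "i \<in> {1..4}" shows "\<exists>k0. {k. ext2 i k \<and> jset {i,k} = 0} = {k0}"
proof -
  have "i = 1 \<or> i = 2 \<or> i = 3 \<or> i = 4" using assms by auto
  then show ?thesis
    by (elim disjE) (simp_all add: ext2_def jset_def doubleton_eq_iff, auto)
qed

end


context qtree begin

lemma fl0_QL: assumes "{(c,i),(d,k)} \<in> QL"
  shows "(c \<noteq> d \<and> i = k \<and> {c,d} \<in> E \<and> fl0 {(c,i),(d,k)} = Inl {c,d}) \<or>
         (c = d \<and> fl0 {(c,i),(d,k)} = Inr (c, jset {i,k}) \<and>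
           ((sdeg E c = 1 \<and> ext1 i k) \<or> (sdeg E c = 2 \<and> ext2 i k)))"
  using adj_cases[OF assms] fl0_t fl0_e by auto

lemma wfQ: "wf_mgraph (Q4 V E)"
  unfolding wf_mgraph_def
proof (intro conjI ballI)
  show "finite (verts (Q4 V E))" using finV by simp
  show "finite (links (Q4 V E))" using finQL by simp
  fix l assume "l \<in> links (Q4 V E)"
  then have l: "l \<in> QL" by simp
  obtain x y where xy: "l = {x,y}" "x \<noteq> y" "x \<in> V \<times> {1..4}" "y \<in> V \<times> {1..4}" using QL_form[OF l] by blast
  show "ends (Q4 V E) l \<noteq> {#}" using xy by simp
  show "size (ends (Q4 V E) l) \<le> 2" using xy by simp
  show "set_mset (ends (Q4 V E) l) \<subseteq> verts (Q4 V E)" using xy by simp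
qed

lemma wfH: "wf_mgraph (T3 V E)"
  unfolding wf_mgraph_def
proof (intro conjI ballI)
  show "finite (verts (T3 V E))" using finV by simp
  have "{(u, j). u \<in> V \<and> j < 3 - sdeg E u} \<subseteq> V \<times> {..<3}" by auto
  then have "finite {(u, j). u \<in> V \<and> j < 3 - sdeg E u}" using finV finite_subset by blast
  then show "finite (links (T3 V E))" unfolding links_H using finE by simp
  fix l assume l: "l \<in> links (T3 V E)"
  then consider (i) e where "l = Inl e" "e \<in> E" | (r) u j where "l = Inr (u,j)" "u \<in> V"
    unfolding links_H by blast
  then have "ends (T3 V E) l \<noteq> {#} \<and> size (ends (T3 V E) l) \<le> 2 \<and> set_mset (ends (T3 V E) l) \<subseteq> verts (T3 V E)"
  proof cases
    case i
    obtain a b where "a \<noteq> b" "e = {a,b}" "a \<in> V" "b \<in> V" using E_form[OF i(2)] by blast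
    then show ?thesis using i by simp
  next
    case r then show ?thesis by simp
  qed
  then show "ends (T3 V E) l \<noteq> {#}" "size (ends (T3 V E) l) \<le> 2" "set_mset (ends (T3 V E) l) \<subseteq> verts (T3 V E)"
    by auto
qed

lemma fl0_H: assumes "l \<in> QL" shows "fl0 l \<in> links (T3 V E)"
proof -
  obtain x y where xy: "l = {x,y}" "x \<noteq> y" "x \<in> V \<times> {1..4}" "y \<in> V \<times> {1..4}" using QL_form[OF assms] by blast
  obtain c i where ci: "x = (c,i)" by (cases x)
  obtain d k where dk: "y = (d,k)" by (cases y)
  have h: "{(c,i),(d,k)} \<in> QL" using assms xy ci dk by simp
  have cV: "c \<in> V" using xy(3) ci by simp
  from fl0_QL[OF h] show ?thesis
  proof (elim disjE conjE)
    assume "c \<noteq> d" "i = k" "{c,d} \<in> E" "fl0 {(c,i),(d,k)} = Inl {c,d}"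
    then show ?thesis using xy ci dk unfolding links_H by simp
  next
    assume a: "c = d" "fl0 {(c, i), (d, k)} = Inr (c, jset {i, k})" "sdeg E c = 1" "ext1 i k"
    have "jset {i,k} < 3 - sdeg E c" using a(3) unfolding jset_def by simp
    then have "(c, jset {i,k}) \<in> {(u, j). u \<in> V \<and> j < 3 - sdeg E u}" using cV by simp
    then show ?thesis using a xy ci dk unfolding links_H by simp
  next
    assume a: "c = d" "fl0 {(c, i), (d, k)} = Inr (c, jset {i, k})" "sdeg E c = 2" "ext2 i k"
    have "jset {i,k} = 0" using a(4) unfolding jset_def ext2_def by (auto simp: doubleton_eq_iff)
    then have "(c, jset {i,k}) \<in> {(u, j). u \<in> V \<and> j < 3 - sdeg E u}" using cV a(3) by simp
    then show ?thesis using a xy ci dk unfolding links_H by simp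
  qed
qed

lemma nbrs_Inl: assumes "{p,q} \<in> E" "i \<in> {1..4}"
  shows "{y. {(p,i),y} \<in> {l\<in>QL. fl0 l = Inl {p,q}}} = {(q,i)}"
proof
  have pq: "p \<noteq> q" using E_V assms(1) by blast
  show "{(q,i)} \<subseteq> {y. {(p,i),y} \<in> {l\<in>QL. fl0 l = Inl {p,q}}}"
    using assms pq fl0_t by (simp add: adj_iff)
  show "{y. {(p,i),y} \<in> {l\<in>QL. fl0 l = Inl {p,q}}} \<subseteq> {(q,i)}"
  proof
    fix y assume "y \<in> {y. {(p,i),y} \<in> {l\<in>QL. fl0 l = Inl {p,q}}}"
    then have h: "{(p,i),y} \<in> QL" "fl0 {(p,i),y} = Inl {p,q}" by auto
    obtain c k where ck: "y = (c,k)" by (cases y)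
    from fl0_QL[of p i c k] h ck have "p \<noteq> c \<and> i = k \<and> {p,c} = {p,q}" by auto
    then show "y \<in> {(q,i)}" using ck by (auto simp: doubleton_eq_iff)
  qed
qed

lemma nbrs_Inr: assumes "p \<in> V" "i \<in> {1..4}" "j < 3 - sdeg E p"
  shows "\<exists>y0. {y. {(p,i),y} \<in> {l\<in>QL. fl0 l = Inr (p,j)}} = {y0}"
proof -
  have char: "{(p,i),(c,k)} \<in> QL \<and> fl0 {(p,i),(c,k)} = Inr (p,j) \<longleftrightarrow>
      c = p \<and> ((sdeg E p = 1 \<and> ext1 i k) \<or> (sdeg E p = 2 \<and> ext2 i k)) \<and> jset {i,k} = j" for c k
  proof
    assume h: "{(p,i),(c,k)} \<in> QL \<and> fl0 {(p,i),(c,k)} = Inr (p,j)"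
    then show "c = p \<and> ((sdeg E p = 1 \<and> ext1 i k) \<or> (sdeg E p = 2 \<and> ext2 i k)) \<and> jset {i,k} = j"
      using fl0_QL[of p i c k] by auto
  next
    assume h: "c = p \<and> ((sdeg E p = 1 \<and> ext1 i k) \<or> (sdeg E p = 2 \<and> ext2 i k)) \<and> jset {i,k} = j"
    then show "{(p,i),(c,k)} \<in> QL \<and> fl0 {(p,i),(c,k)} = Inr (p,j)"
      using assms(1) fl0_e by (auto simp: adj_iff)
  qed
  have d: "sdeg E p = 1 \<or> sdeg E p = 2" using sdeg_pos[OF assms(1)] assms(3) by auto
  then obtain k0 where k0: "{k. ((sdeg E p = 1 \<and> ext1 i k) \<or> (sdeg E p = 2 \<and> ext2 i k)) \<and> jset {i,k} = j} = {k0}"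
  proof
    assume d1: "sdeg E p = 1"
    obtain k0 where "{k. ext1 i k \<and> jset {i,k} = j} = {k0}" using ext1_uniq[OF assms(2), of j] assms(3) d1 by auto
    then show ?thesis using that d1 by simp
  next
    assume d2: "sdeg E p = 2"
    then have "j = 0" using assms(3) by simp
    obtain k0 where "{k. ext2 i k \<and> jset {i,k} = 0} = {k0}" using ext2_uniq[OF assms(2)] by auto
    then show ?thesis using that d2 \<open>j = 0\<close> by simp
  qed
  have "{y. {(p,i),y} \<in> {l\<in>QL. fl0 l = Inr (p,j)}} = {(p,k0)}"
  proof (intro set_eqI iffI)
    fix y assume "y \<in> {y. {(p,i),y} \<in> {l\<in>QL. fl0 l = Inr (p,j)}}"
    moreover obtain c k where ck: "y = (c,k)" by (cases y)
    ultimately have "c = p \<and> ((sdeg E p = 1 \<and> ext1 i k) \<or> (sdeg E p = 2 \<and> ext2 i k)) \<and> jset {i,k} = j"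
      using char by auto
    then have "c = p" "k \<in> {k0}" using k0 by auto
    then show "y \<in> {(p,k0)}" using ck by simp
  next
    fix y assume "y \<in> {(p,k0)}"
    then have y: "y = (p,k0)" by simp
    have "k0 \<in> {k. ((sdeg E p = 1 \<and> ext1 i k) \<or> (sdeg E p = 2 \<and> ext2 i k)) \<and> jset {i,k} = j}"
      using k0 by simp
    then show "y \<in> {y. {(p,i),y} \<in> {l\<in>QL. fl0 l = Inr (p,j)}}" using char[of p k0] y by simp
  qed
  then show ?thesis by blast
qed

end


context qtree begin

lemma cov_Inl: assumes "ee \<in> E"
  shows "(\<forall>u v. u \<noteq> v \<and> ends (T3 V E) (Inl ee) = {#u, v#} \<longrightarrow>
            (\<forall>l\<in>links (Q4 V E). fl0 l = Inl ee \<longrightarrow> image_mset fst (ends (Q4 V E) l) = {#u, v#}) \<and>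
            (\<forall>x\<in>verts (Q4 V E). fst x = u \<or> fst x = v \<longrightarrow> deg_in (Q4 V E) {l\<in>links (Q4 V E). fl0 l = Inl ee} x = 1)) \<and>
        (\<forall>u. ends (T3 V E) (Inl ee) = {#u, u#} \<longrightarrow>
            (\<forall>l\<in>links (Q4 V E). fl0 l = Inl ee \<longrightarrow> image_mset fst (ends (Q4 V E) l) = {#u, u#}) \<and>
            (\<forall>x\<in>verts (Q4 V E). fst x = u \<longrightarrow> deg_in (Q4 V E) {l\<in>links (Q4 V E). fl0 l = Inl ee} x = 2)) \<and>
        (\<forall>u. ends (T3 V E) (Inl ee) = {#u#} \<longrightarrow>
            (\<forall>l\<in>links (Q4 V E). fl0 l = Inl ee \<longrightarrow> (\<forall>y\<in>#ends (Q4 V E) l. fst y = u)) \<and>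
            (\<forall>x\<in>verts (Q4 V E). fst x = u \<longrightarrow> deg_in (Q4 V E) {l\<in>links (Q4 V E). fl0 l = Inl ee} x = 1))"
proof -
  obtain a b where ab: "a \<noteq> b" "ee = {a,b}" "mset_set ee = {#a,b#}" using E_mset[OF assms] by metis
  have P1: "(\<forall>l\<in>links (Q4 V E). fl0 l = Inl ee \<longrightarrow> image_mset fst (ends (Q4 V E) l) = {#u, v#}) \<and>
            (\<forall>x\<in>verts (Q4 V E). fst x = u \<or> fst x = v \<longrightarrow> deg_in (Q4 V E) {l\<in>links (Q4 V E). fl0 l = Inl ee} x = 1)"
    if uv: "u \<noteq> v" "{#a,b#} = {#u, v#}" for u v
  proof -
    have "{a,b} = {u,v}" using uv(2) mset_pair_eq by metis
    then have ee: "ee = {u,v}" using ab by simp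
    have uvE: "{u,v} \<in> E" using assms ee by simp
    have vuE: "{v,u} \<in> E" using uvE by (simp add: insert_commute)
    show ?thesis
    proof (intro conjI ballI impI)
      fix l assume l: "l \<in> links (Q4 V E)" "fl0 l = Inl ee"
      then have lQ: "l \<in> QL" by simp
      obtain x y where xy: "l = {x,y}" "x \<noteq> y" using QL_form[OF lQ] by blast
      obtain c i where ci: "x = (c,i)" by (cases x)
      obtain d k where dk: "y = (d,k)" by (cases y)
      have h: "{(c,i),(d,k)} \<in> QL" using lQ xy ci dk by simp
      have "c \<noteq> d \<and> i = k \<and> fl0 {(c,i),(d,k)} = Inl {c,d}"
        using fl0_QL[OF h] l(2) xy ci dk by auto
      then have cd: "c \<noteq> d" "i = k" "{c,d} = {u,v}" using l(2) xy ci dk ee by auto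
      have "{#c,d#} = {#u,v#}" using cd(3) by (auto simp: doubleton_eq_iff add_mset_commute)
      then show "image_mset fst (ends (Q4 V E) l) = {#u, v#}" using xy ci dk cd by simp
    next
      fix x assume x: "x \<in> verts (Q4 V E)" "fst x = u \<or> fst x = v"
      obtain p i where pi: "x = (p,i)" by (cases x)
      have i4: "i \<in> {1..4}" using x(1) pi by simp
      have S: "{l\<in>links (Q4 V E). fl0 l = Inl ee} \<subseteq> QL" by auto
      have "card {y. {x,y} \<in> {l\<in>QL. fl0 l = Inl ee}} = 1"
      proof (cases "p = u")
        case True
        then show ?thesis using nbrs_Inl[OF uvE i4] pi ee by simp
      next
        case False
        then have "p = v" using x(2) pi by simp
        moreover have "Inl ee = (Inl {v,u} :: 'a set + ('a \<times> nat))" using ee by (simp add: insert_commute)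
        ultimately show ?thesis using nbrs_Inl[OF vuE i4] pi by simp
      qed
      then show "deg_in (Q4 V E) {l\<in>links (Q4 V E). fl0 l = Inl ee} x = 1"
        using deg_in_eq[OF S] by simp
    qed
  qed
  show ?thesis
  proof (intro conjI)
    show "\<forall>u v. u \<noteq> v \<and> ends (T3 V E) (Inl ee) = {#u, v#} \<longrightarrow>
            (\<forall>l\<in>links (Q4 V E). fl0 l = Inl ee \<longrightarrow> image_mset fst (ends (Q4 V E) l) = {#u, v#}) \<and>
            (\<forall>x\<in>verts (Q4 V E). fst x = u \<or> fst x = v \<longrightarrow> deg_in (Q4 V E) {l\<in>links (Q4 V E). fl0 l = Inl ee} x = 1)"
    proof (intro allI impI)
      fix u v assume h: "u \<noteq> v \<and> ends (T3 V E) (Inl ee) = {#u, v#}"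
      then have h1: "u \<noteq> v" and h2: "{#a,b#} = {#u,v#}" using ab by auto
      show "(\<forall>l\<in>links (Q4 V E). fl0 l = Inl ee \<longrightarrow> image_mset fst (ends (Q4 V E) l) = {#u, v#}) \<and>
            (\<forall>x\<in>verts (Q4 V E). fst x = u \<or> fst x = v \<longrightarrow> deg_in (Q4 V E) {l\<in>links (Q4 V E). fl0 l = Inl ee} x = 1)"
        by (rule P1[OF h1 h2])
    qed
    show "\<forall>u. ends (T3 V E) (Inl ee) = {#u, u#} \<longrightarrow>
            (\<forall>l\<in>links (Q4 V E). fl0 l = Inl ee \<longrightarrow> image_mset fst (ends (Q4 V E) l) = {#u, u#}) \<and>
            (\<forall>x\<in>verts (Q4 V E). fst x = u \<longrightarrow> deg_in (Q4 V E) {l\<in>links (Q4 V E). fl0 l = Inl ee} x = 2)"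
    proof (intro allI impI)
      fix u assume "ends (T3 V E) (Inl ee) = {#u, u#}"
      then have "{#a,b#} = {#u,u#}" using ab by simp
      then have "{a,b} = {u}" using mset_pair_eq by fastforce
      then have False using ab by (simp add: doubleton_eq_iff)
      then show "(\<forall>l\<in>links (Q4 V E). fl0 l = Inl ee \<longrightarrow> image_mset fst (ends (Q4 V E) l) = {#u, u#}) \<and>
            (\<forall>x\<in>verts (Q4 V E). fst x = u \<longrightarrow> deg_in (Q4 V E) {l\<in>links (Q4 V E). fl0 l = Inl ee} x = 2)" ..
    qed
    show "\<forall>u. ends (T3 V E) (Inl ee) = {#u#} \<longrightarrow>
            (\<forall>l\<in>links (Q4 V E). fl0 l = Inl ee \<longrightarrow> (\<forall>y\<in>#ends (Q4 V E) l. fst y = u)) \<and>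
            (\<forall>x\<in>verts (Q4 V E). fst x = u \<longrightarrow> deg_in (Q4 V E) {l\<in>links (Q4 V E). fl0 l = Inl ee} x = 1)"
    proof (intro allI impI)
      fix u assume "ends (T3 V E) (Inl ee) = {#u#}"
      then have "{#a,b#} = {#u#}" using ab by simp
      then have False by (metis size_add_mset size_single numeral_2_eq_2 n_not_Suc_n One_nat_def size_empty)
      then show "(\<forall>l\<in>links (Q4 V E). fl0 l = Inl ee \<longrightarrow> (\<forall>y\<in>#ends (Q4 V E) l. fst y = u)) \<and>
            (\<forall>x\<in>verts (Q4 V E). fst x = u \<longrightarrow> deg_in (Q4 V E) {l\<in>links (Q4 V E). fl0 l = Inl ee} x = 1)" ..
    qed
  qed
qed

lemma cov_Inr: assumes "p \<in> V" "j < 3 - sdeg E p"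
  shows "(\<forall>u v. u \<noteq> v \<and> ends (T3 V E) (Inr (p,j)) = {#u, v#} \<longrightarrow>
            (\<forall>l\<in>links (Q4 V E). fl0 l = Inr (p,j) \<longrightarrow> image_mset fst (ends (Q4 V E) l) = {#u, v#}) \<and>
            (\<forall>x\<in>verts (Q4 V E). fst x = u \<or> fst x = v \<longrightarrow> deg_in (Q4 V E) {l\<in>links (Q4 V E). fl0 l = Inr (p,j)} x = 1)) \<and>
        (\<forall>u. ends (T3 V E) (Inr (p,j)) = {#u, u#} \<longrightarrow>
            (\<forall>l\<in>links (Q4 V E). fl0 l = Inr (p,j) \<longrightarrow> image_mset fst (ends (Q4 V E) l) = {#u, u#}) \<and>
            (\<forall>x\<in>verts (Q4 V E). fst x = u \<longrightarrow> deg_in (Q4 V E) {l\<in>links (Q4 V E). fl0 l = Inr (p,j)} x = 2)) \<and>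
        (\<forall>u. ends (T3 V E) (Inr (p,j)) = {#u#} \<longrightarrow>
            (\<forall>l\<in>links (Q4 V E). fl0 l = Inr (p,j) \<longrightarrow> (\<forall>y\<in>#ends (Q4 V E) l. fst y = u)) \<and>
            (\<forall>x\<in>verts (Q4 V E). fst x = u \<longrightarrow> deg_in (Q4 V E) {l\<in>links (Q4 V E). fl0 l = Inr (p,j)} x = 1))"
proof (intro conjI)
  show "\<forall>u v. u \<noteq> v \<and> ends (T3 V E) (Inr (p,j)) = {#u, v#} \<longrightarrow>
            (\<forall>l\<in>links (Q4 V E). fl0 l = Inr (p,j) \<longrightarrow> image_mset fst (ends (Q4 V E) l) = {#u, v#}) \<and>
            (\<forall>x\<in>verts (Q4 V E). fst x = u \<or> fst x = v \<longrightarrow> deg_in (Q4 V E) {l\<in>links (Q4 V E). fl0 l = Inr (p,j)} x = 1)"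
  proof (intro allI impI)
  fix u v assume "u \<noteq> v \<and> ends (T3 V E) (Inr (p,j)) = {#u, v#}"
  then have "{#p#} = {#u,v#}" by simp
  then have False by (metis size_add_mset size_single numeral_2_eq_2 n_not_Suc_n One_nat_def size_empty)
  then show "(\<forall>l\<in>links (Q4 V E). fl0 l = Inr (p,j) \<longrightarrow> image_mset fst (ends (Q4 V E) l) = {#u, v#}) \<and>
            (\<forall>x\<in>verts (Q4 V E). fst x = u \<or> fst x = v \<longrightarrow> deg_in (Q4 V E) {l\<in>links (Q4 V E). fl0 l = Inr (p,j)} x = 1)" ..
  qed
  show "\<forall>u. ends (T3 V E) (Inr (p,j)) = {#u, u#} \<longrightarrow>
            (\<forall>l\<in>links (Q4 V E). fl0 l = Inr (p,j) \<longrightarrow> image_mset fst (ends (Q4 V E) l) = {#u, u#}) \<and>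
            (\<forall>x\<in>verts (Q4 V E). fst x = u \<longrightarrow> deg_in (Q4 V E) {l\<in>links (Q4 V E). fl0 l = Inr (p,j)} x = 2)"
  proof (intro allI impI)
  fix u assume "ends (T3 V E) (Inr (p,j)) = {#u, u#}"
  then have "{#p#} = {#u,u#}" by simp
  then have False by (metis size_add_mset size_single numeral_2_eq_2 n_not_Suc_n One_nat_def size_empty)
  then show "(\<forall>l\<in>links (Q4 V E). fl0 l = Inr (p,j) \<longrightarrow> image_mset fst (ends (Q4 V E) l) = {#u, u#}) \<and>
            (\<forall>x\<in>verts (Q4 V E). fst x = u \<longrightarrow> deg_in (Q4 V E) {l\<in>links (Q4 V E). fl0 l = Inr (p,j)} x = 2)" ..
  qed
  show "\<forall>u. ends (T3 V E) (Inr (p,j)) = {#u#} \<longrightarrow>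
            (\<forall>l\<in>links (Q4 V E). fl0 l = Inr (p,j) \<longrightarrow> (\<forall>y\<in>#ends (Q4 V E) l. fst y = u)) \<and>
            (\<forall>x\<in>verts (Q4 V E). fst x = u \<longrightarrow> deg_in (Q4 V E) {l\<in>links (Q4 V E). fl0 l = Inr (p,j)} x = 1)"
  proof (intro allI impI)
  fix u assume "ends (T3 V E) (Inr (p,j)) = {#u#}"
  then have up: "u = p" by simp
  have A: "\<forall>l\<in>links (Q4 V E). fl0 l = Inr (p,j) \<longrightarrow> (\<forall>y\<in>#ends (Q4 V E) l. fst y = u)"
  proof (intro ballI impI)
    fix l y assume l: "l \<in> links (Q4 V E)" "fl0 l = Inr (p,j)" and y: "y \<in># ends (Q4 V E) l"
    then have lQ: "l \<in> QL" by simp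
    obtain x1 x2 where xy: "l = {x1,x2}" "x1 \<noteq> x2" using QL_form[OF lQ] by blast
    obtain c i where ci: "x1 = (c,i)" by (cases x1)
    obtain d k where dk: "x2 = (d,k)" by (cases x2)
    have h: "{(c,i),(d,k)} \<in> QL" using lQ xy ci dk by simp
    have "c = d \<and> fl0 {(c,i),(d,k)} = Inr (c, jset {i,k})"
      using fl0_QL[OF h] l(2) xy ci dk by auto
    then have "c = p" "d = p" using l(2) xy ci dk by auto
    moreover have "y \<in> l" using y fin_l[OF lQ] by simp
    ultimately show "fst y = u" using xy ci dk up by auto
  qed
  have B: "\<forall>x\<in>verts (Q4 V E). fst x = u \<longrightarrow> deg_in (Q4 V E) {l\<in>links (Q4 V E). fl0 l = Inr (p,j)} x = 1"
  proof (intro ballI impI)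
    fix x assume x: "x \<in> verts (Q4 V E)" "fst x = u"
    obtain q i where qi: "x = (q,i)" by (cases x)
    have i4: "i \<in> {1..4}" and qp: "q = p" using x qi up by auto
    have S: "{l\<in>links (Q4 V E). fl0 l = Inr (p,j)} \<subseteq> QL" by auto
    obtain y0 where "{y. {(p,i),y} \<in> {l\<in>QL. fl0 l = Inr (p,j)}} = {y0}" using nbrs_Inr[OF assms(1) i4 assms(2)] by blast
    then have "card {y. {x,y} \<in> {l\<in>QL. fl0 l = Inr (p,j)}} = 1" using qi qp by simp
    then show "deg_in (Q4 V E) {l\<in>links (Q4 V E). fl0 l = Inr (p,j)} x = 1"
      using deg_in_eq[OF S] by simp
  qed
  from A B show "(\<forall>l\<in>links (Q4 V E). fl0 l = Inr (p,j) \<longrightarrow> (\<forall>y\<in>#ends (Q4 V E) l. fst y = u)) \<and>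
            (\<forall>x\<in>verts (Q4 V E). fst x = u \<longrightarrow> deg_in (Q4 V E) {l\<in>links (Q4 V E). fl0 l = Inr (p,j)} x = 1)" ..
  qed
qed

lemma cov: "covering_projection (Q4 V E) (T3 V E) fst fl0"
  unfolding covering_projection_def
proof (intro conjI)
  show "wf_mgraph (Q4 V E)" by (rule wfQ)
  show "wf_mgraph (T3 V E)" by (rule wfH)
  show "fst ` verts (Q4 V E) \<subseteq> verts (T3 V E)" by auto
  show "fl0 ` links (Q4 V E) \<subseteq> links (T3 V E)" using fl0_H by auto
  show "\<forall>e\<in>links (T3 V E).
     (\<forall>u v. u \<noteq> v \<and> ends (T3 V E) e = {#u, v#} \<longrightarrow>
            (\<forall>l\<in>links (Q4 V E). fl0 l = e \<longrightarrow> image_mset fst (ends (Q4 V E) l) = {#u, v#}) \<and>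
            (\<forall>x\<in>verts (Q4 V E). fst x = u \<or> fst x = v \<longrightarrow> deg_in (Q4 V E) {l\<in>links (Q4 V E). fl0 l = e} x = 1)) \<and>
        (\<forall>u. ends (T3 V E) e = {#u, u#} \<longrightarrow>
            (\<forall>l\<in>links (Q4 V E). fl0 l = e \<longrightarrow> image_mset fst (ends (Q4 V E) l) = {#u, u#}) \<and>
            (\<forall>x\<in>verts (Q4 V E). fst x = u \<longrightarrow> deg_in (Q4 V E) {l\<in>links (Q4 V E). fl0 l = e} x = 2)) \<and>
        (\<forall>u. ends (T3 V E) e = {#u#} \<longrightarrow>
            (\<forall>l\<in>links (Q4 V E). fl0 l = e \<longrightarrow> (\<forall>y\<in>#ends (Q4 V E) l. fst y = u)) \<and>
            (\<forall>x\<in>verts (Q4 V E). fst x = u \<longrightarrow> deg_in (Q4 V E) {l\<in>links (Q4 V E). fl0 l = e} x = 1))"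
  proof
    fix e assume "e \<in> links (T3 V E)"
    then consider (i) ee where "e = Inl ee" "ee \<in> E" | (r) p j where "e = Inr (p,j)" "p \<in> V" "j < 3 - sdeg E p"
      unfolding links_H by blast
    then show "(\<forall>u v. u \<noteq> v \<and> ends (T3 V E) e = {#u, v#} \<longrightarrow>
            (\<forall>l\<in>links (Q4 V E). fl0 l = e \<longrightarrow> image_mset fst (ends (Q4 V E) l) = {#u, v#}) \<and>
            (\<forall>x\<in>verts (Q4 V E). fst x = u \<or> fst x = v \<longrightarrow> deg_in (Q4 V E) {l\<in>links (Q4 V E). fl0 l = e} x = 1)) \<and>
        (\<forall>u. ends (T3 V E) e = {#u, u#} \<longrightarrow>
            (\<forall>l\<in>links (Q4 V E). fl0 l = e \<longrightarrow> image_mset fst (ends (Q4 V E) l) = {#u, u#}) \<and>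
            (\<forall>x\<in>verts (Q4 V E). fst x = u \<longrightarrow> deg_in (Q4 V E) {l\<in>links (Q4 V E). fl0 l = e} x = 2)) \<and>
        (\<forall>u. ends (T3 V E) e = {#u#} \<longrightarrow>
            (\<forall>l\<in>links (Q4 V E). fl0 l = e \<longrightarrow> (\<forall>y\<in>#ends (Q4 V E) l. fst y = u)) \<and>
            (\<forall>x\<in>verts (Q4 V E). fst x = u \<longrightarrow> deg_in (Q4 V E) {l\<in>links (Q4 V E). fl0 l = e} x = 1))"
    proof cases
      case i show ?thesis unfolding i(1) by (rule cov_Inl[OF i(2)])
    next
      case r show ?thesis unfolding r(1) by (rule cov_Inr[OF r(2,3)])
    qed
  qed
qed

end

locale qcov = qtree +
  fixes fv :: "'a \<times> nat \<Rightarrow> 'a" and fl :: "('a \<times> nat) set \<Rightarrow> 'a set + ('a \<times> nat)"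
  assumes cp: "covering_projection (Q4 V E) (T3 V E) fv fl"
begin

lemma fv_V: "x \<in> V \<times> {1..4} \<Longrightarrow> fv x \<in> V"
  using cp unfolding covering_projection_def by auto

lemma fl_H: "l \<in> QL \<Longrightarrow> fl l \<in> links (T3 V E)"
  using cp unfolding covering_projection_def by auto

lemma clauses: "\<forall>e\<in>links (T3 V E).
        (\<forall>u v. u \<noteq> v \<and> ends (T3 V E) e = {#u, v#} \<longrightarrow>
            (\<forall>l\<in>QL. fl l = e \<longrightarrow> image_mset fv (mset_set l) = {#u, v#}) \<and>
            (\<forall>x\<in>V \<times> {1..4}. fv x = u \<or> fv x = v \<longrightarrow> deg_in (Q4 V E) {l\<in>QL. fl l = e} x = 1)) \<and>
        (\<forall>u. ends (T3 V E) e = {#u, u#} \<longrightarrow>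
            (\<forall>l\<in>QL. fl l = e \<longrightarrow> image_mset fv (mset_set l) = {#u, u#}) \<and>
            (\<forall>x\<in>V \<times> {1..4}. fv x = u \<longrightarrow> deg_in (Q4 V E) {l\<in>QL. fl l = e} x = 2)) \<and>
        (\<forall>u. ends (T3 V E) e = {#u#} \<longrightarrow>
            (\<forall>l\<in>QL. fl l = e \<longrightarrow> (\<forall>y\<in>#mset_set l. fv y = u)) \<and>
            (\<forall>x\<in>V \<times> {1..4}. fv x = u \<longrightarrow> deg_in (Q4 V E) {l\<in>QL. fl l = e} x = 1))"
  using cp unfolding covering_projection_def verts_Q links_Q ends_Q by (elim conjE)

lemma edge_cl: assumes "e \<in> links (T3 V E)" "u \<noteq> v" "ends (T3 V E) e = {#u, v#}"
  shows "(\<forall>l\<in>QL. fl l = e \<longrightarrow> image_mset fv (mset_set l) = {#u, v#}) \<and>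
            (\<forall>x\<in>V \<times> {1..4}. fv x = u \<or> fv x = v \<longrightarrow> deg_in (Q4 V E) {l\<in>QL. fl l = e} x = 1)"
proof -
  have "\<forall>u v. u \<noteq> v \<and> ends (T3 V E) e = {#u, v#} \<longrightarrow>
            (\<forall>l\<in>QL. fl l = e \<longrightarrow> image_mset fv (mset_set l) = {#u, v#}) \<and>
            (\<forall>x\<in>V \<times> {1..4}. fv x = u \<or> fv x = v \<longrightarrow> deg_in (Q4 V E) {l\<in>QL. fl l = e} x = 1)"
    by (rule conjunct1[OF bspec[OF clauses assms(1)]])
  then show ?thesis using assms(2,3) by blast
qed

lemma semi_cl: assumes "e \<in> links (T3 V E)" "ends (T3 V E) e = {#u#}"
  shows "(\<forall>l\<in>QL. fl l = e \<longrightarrow> (\<forall>y\<in>#mset_set l. fv y = u)) \<and>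
            (\<forall>x\<in>V \<times> {1..4}. fv x = u \<longrightarrow> deg_in (Q4 V E) {l\<in>QL. fl l = e} x = 1)"
proof -
  have "\<forall>u. ends (T3 V E) e = {#u#} \<longrightarrow>
            (\<forall>l\<in>QL. fl l = e \<longrightarrow> (\<forall>y\<in>#mset_set l. fv y = u)) \<and>
            (\<forall>x\<in>V \<times> {1..4}. fv x = u \<longrightarrow> deg_in (Q4 V E) {l\<in>QL. fl l = e} x = 1)"
    by (rule conjunct2[OF conjunct2[OF bspec[OF clauses assms(1)]]])
  then show ?thesis using assms(2) by blast
qed

lemma edge_cl1: "e \<in> links (T3 V E) \<Longrightarrow> u \<noteq> v \<Longrightarrow> ends (T3 V E) e = {#u, v#} \<Longrightarrow> l \<in> QL \<Longrightarrow> fl l = e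
   \<Longrightarrow> image_mset fv (mset_set l) = {#u, v#}"
  using edge_cl by blast

lemma edge_cl2: "e \<in> links (T3 V E) \<Longrightarrow> u \<noteq> v \<Longrightarrow> ends (T3 V E) e = {#u, v#} \<Longrightarrow> x \<in> V \<times> {1..4}
   \<Longrightarrow> fv x = u \<Longrightarrow> deg_in (Q4 V E) {l\<in>QL. fl l = e} x = 1"
  using edge_cl by blast

lemma semi_cl1: assumes "e \<in> links (T3 V E)" "ends (T3 V E) e = {#u#}" "l \<in> QL" "fl l = e" "y \<in> l"
  shows "fv y = u"
proof -
  have "\<forall>y\<in>#mset_set l. fv y = u" using semi_cl[OF assms(1,2)] assms(3,4) by blast
  then show ?thesis using assms(5) fin_l[OF assms(3)] by simp
qed

lemma semi_cl2: "e \<in> links (T3 V E) \<Longrightarrow> ends (T3 V E) e = {#u#} \<Longrightarrow> x \<in> V \<times> {1..4}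
   \<Longrightarrow> fv x = u \<Longrightarrow> deg_in (Q4 V E) {l\<in>QL. fl l = e} x = 1"
  using semi_cl by blast

lemma C1: assumes "{x,y} \<in> QL"
  shows "fv x = fv y \<or> ({fv x, fv y} \<in> E \<and> fl {x,y} = Inl {fv x, fv y})"
proof -
  have xy: "x \<noteq> y" using assms adj_irrefl by blast
  have H: "fl {x,y} \<in> links (T3 V E)" using fl_H assms by blast
  then consider (i) e where "fl {x,y} = Inl e" "e \<in> E" | (r) a j where "fl {x,y} = Inr (a,j)"
    unfolding links_H by blast
  then show ?thesis
  proof cases
    case i
    obtain a b where ab: "a \<noteq> b" "e = {a,b}" using E_form[OF i(2)] by blast
    have "image_mset fv (mset_set {x,y}) = {#a,b#}"
      using edge_cl1[OF H ab(1) _ assms refl] i ab by simp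
    then have "{#fv x, fv y#} = {#a,b#}" using xy by simp
    then have "{fv x, fv y} = e" using ab mset_pair_eq by metis
    then show ?thesis using i by simp
  next
    case r
    have "fv x = a" "fv y = a" using semi_cl1[OF H _ assms refl] r by auto
    then show ?thesis by simp
  qed
qed

lemma C2ex: assumes "x \<in> V \<times> {1..4}" "{fv x, z} \<in> E"
  shows "\<exists>y. {x,y} \<in> QL \<and> fv y = z"
proof -
  let ?e = "Inl {fv x, z} :: 'a set + ('a \<times> nat)"
  have H: "?e \<in> links (T3 V E)" unfolding links_H using assms(2) by blast
  have ne: "fv x \<noteq> z" using E_V assms(2) by blast
  have en: "ends (T3 V E) ?e = {#fv x, z#}" using ne by simp
  have "deg_in (Q4 V E) {l\<in>QL. fl l = ?e} x = 1"
    using edge_cl2[OF H ne en assms(1) refl] .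
  then have "card {y. {x,y} \<in> {l\<in>QL. fl l = ?e}} = 1"
    by (subst deg_in_eq[symmetric]) auto
  then obtain y where "{y. {x,y} \<in> {l\<in>QL. fl l = ?e}} = {y}" by (rule card_1_singletonE)
  then have "y \<in> {y. {x,y} \<in> {l\<in>QL. fl l = ?e}}" by simp
  then have "{x,y} \<in> {l\<in>QL. fl l = ?e}" by simp
  then have y: "{x,y} \<in> QL" "fl {x,y} = ?e" by auto
  have xy: "x \<noteq> y" using y(1) adj_irrefl by blast
  have "image_mset fv (mset_set {x,y}) = {#fv x, z#}"
    using edge_cl1[OF H ne en y(1) y(2)] .
  then have "{#fv x, fv y#} = {#fv x, z#}" using xy by simp
  then have "fv y = z" by simp
  then show ?thesis using y by blast
qed

lemma C2un: assumes "{x,y1} \<in> QL" "{x,y2} \<in> QL" "fv y1 = fv y2" "fv y1 \<noteq> fv x"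
  shows "y1 = y2"
proof -
  let ?e = "Inl {fv x, fv y1} :: 'a set + ('a \<times> nat)"
  have f1: "fl {x,y1} = ?e" "{fv x, fv y1} \<in> E" using C1[OF assms(1)] assms(4) by auto
  have f2: "fl {x,y2} = ?e" using C1[OF assms(2)] assms(3,4) by auto
  have H: "?e \<in> links (T3 V E)" unfolding links_H using f1(2) by blast
  have ne: "fv x \<noteq> fv y1" using assms(4) by simp
  have en: "ends (T3 V E) ?e = {#fv x, fv y1#}" using ne by simp
  have xV: "x \<in> V \<times> {1..4}" using adj_verts assms(1) by blast
  have "deg_in (Q4 V E) {l\<in>QL. fl l = ?e} x = 1"
    using edge_cl2[OF H ne en xV refl] .
  then have c: "card {y. {x,y} \<in> {l\<in>QL. fl l = ?e}} = 1"
    by (subst deg_in_eq[symmetric]) auto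
  have "y1 \<in> {y. {x,y} \<in> {l\<in>QL. fl l = ?e}}" "y2 \<in> {y. {x,y} \<in> {l\<in>QL. fl l = ?e}}"
    using assms f1 f2 by auto
  moreover from c obtain w where w: "{y. {x,y} \<in> {l\<in>QL. fl l = ?e}} = {w}" by (rule card_1_singletonE)
  ultimately have "y1 \<in> {w}" "y2 \<in> {w}" by (simp_all only: w)
  then show ?thesis by simp
qed

lemma C3: assumes "x \<in> V \<times> {1..4}" "sdeg E (fv x) \<le> 1"
  shows "\<exists>y1 y2. y1 \<noteq> y2 \<and> {x,y1} \<in> QL \<and> {x,y2} \<in> QL \<and> fv y1 = fv x \<and> fv y2 = fv x"
proof -
  have fx: "fv x \<in> V" using fv_V assms(1) .
  have sem: "\<exists>y. {x,y} \<in> QL \<and> fl {x,y} = Inr (fv x, k) \<and> fv y = fv x" if k: "k < 2" for k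
  proof -
    let ?e = "Inr (fv x, k) :: 'a set + ('a \<times> nat)"
    have "(fv x, k) \<in> {(u, j). u \<in> V \<and> j < 3 - sdeg E u}" using fx k assms(2) by simp
    then have H: "?e \<in> links (T3 V E)" unfolding links_H by (rule UnI2[OF imageI])
    have en: "ends (T3 V E) ?e = {#fv x#}" by simp
    have "deg_in (Q4 V E) {l\<in>QL. fl l = ?e} x = 1"
      using semi_cl2[OF H en assms(1) refl] .
    then have "card {y. {x,y} \<in> {l\<in>QL. fl l = ?e}} = 1"
      by (subst deg_in_eq[symmetric]) auto
    then obtain y where "{y. {x,y} \<in> {l\<in>QL. fl l = ?e}} = {y}" by (rule card_1_singletonE)
    then have "y \<in> {y. {x,y} \<in> {l\<in>QL. fl l = ?e}}" by simp
    then have "{x,y} \<in> {l\<in>QL. fl l = ?e}" by simp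
    then have y: "{x,y} \<in> QL" "fl {x,y} = ?e" by auto
    have "fv y = fv x" by (rule semi_cl1[OF H en y(1) y(2)]) simp
    then show ?thesis using y by blast
  qed
  obtain y1 where y1: "{x,y1} \<in> QL" "fl {x,y1} = Inr (fv x, 0)" "fv y1 = fv x" using sem[of 0] by auto
  obtain y2 where y2: "{x,y2} \<in> QL" "fl {x,y2} = Inr (fv x, 1)" "fv y2 = fv x" using sem[of 1] by auto
  have "y1 \<noteq> y2" using y1(2) y2(2) by auto
  then show ?thesis using y1 y2 by blast
qed


definition Fib :: "'a \<Rightarrow> ('a \<times> nat) set" where
  "Fib y = {x \<in> V \<times> {1..4}. fv x = y}"

lemma leaf_mate_gen:
  assumes l: "l \<in> V" "sdeg E l = 1"
    and ex: "ext1 k k1" "ext1 k k3" "ext1 k2 k1" "ext1 k2 k3" "k1 \<noteq> k3" "k \<noteq> k2"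
    and p: "k1 mod 2 \<noteq> k mod 2" "k3 mod 2 \<noteq> k mod 2"
  shows "\<exists>x'. x' \<in> V \<times> {1..4} \<and> fv x' = fv (l,k) \<and> snd x' mod 2 \<noteq> k mod 2"
proof -
  have sym: "ext1 i j \<Longrightarrow> ext1 j i" for i j unfolding ext1_def by auto
  have adj: "{(l,i),(l,j)} \<in> QL" if "ext1 i j" for i j using l that by (simp add: adj_iff)
  have a1: "{(l,k),(l,k1)} \<in> QL" by (rule adj[OF ex(1)])
  have a1': "{(l,k1),(l,k)} \<in> QL" by (rule adj[OF sym[OF ex(1)]])
  have a3: "{(l,k),(l,k3)} \<in> QL" by (rule adj[OF ex(2)])
  have a21: "{(l,k2),(l,k1)} \<in> QL" by (rule adj[OF ex(3)])
  have a21': "{(l,k1),(l,k2)} \<in> QL" by (rule adj[OF sym[OF ex(3)]])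
  have a23: "{(l,k2),(l,k3)} \<in> QL" by (rule adj[OF ex(4)])
  have vk1: "(l,k1) \<in> V \<times> {1..4}" using adj_verts a1 by blast
  have vk3: "(l,k3) \<in> V \<times> {1..4}" using adj_verts a3 by blast
  show ?thesis
  proof (cases "fv (l,k1) = fv (l,k)")
    case True then show ?thesis using vk1 p by auto
  next
    case n1: False
    show ?thesis
    proof (cases "fv (l,k3) = fv (l,k)")
      case True then show ?thesis using vk3 p by auto
    next
      case n3: False
      define z where "z = fv (l,k)"
      define y where "y = fv (l,k1)"
      define y' where "y' = fv (l,k3)"
      define t where "t = fv (l,k2)"
      have zy: "{z,y} \<in> E" using C1[OF a1] n1 unfolding z_def y_def by auto
      have zy': "{z,y'} \<in> E" using C1[OF a3] n3 unfolding z_def y'_def by auto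
      have yy': "y \<noteq> y'"
      proof
        assume "y = y'"
        then have "(l,k1) = (l,k3)" using C2un[OF a1 a3 _ n1] unfolding y_def y'_def by blast
        then show False using ex(5) by simp
      qed
      have ty: "t = y \<or> {t,y} \<in> E" using C1[OF a21] unfolding t_def y_def by auto
      have ty': "t = y' \<or> {t,y'} \<in> E" using C1[OF a23] unfolding t_def y'_def by auto
      have tz: "t \<noteq> z"
      proof
        assume "t = z"
        then have "fv (l,k) = fv (l,k2)" unfolding t_def z_def by simp
        then have "(l,k) = (l,k2)" using C2un[OF a1' a21' _ not_sym[OF n1]] by blast
        then show False using ex(6) by simp
      qed
      have "False"
      proof (cases "t = y")
        case True
        then have "{y,y'} \<in> E" using ty' yy' by auto
        then show False using no_tri[of z y y'] zy zy' by blast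
      next
        case ny: False
        show False
        proof (cases "t = y'")
          case True
          then have "{y',y} \<in> E" using ty yy' by auto
          then have "{y,y'} \<in> E" by (simp add: insert_commute)
          then show False using no_tri[of z y y'] zy zy' by blast
        next
          case False
          then have h1: "{t,y} \<in> E" "{t,y'} \<in> E" using ty ty' ny by auto
          have h2: "{y,t} \<in> E" "{y',z} \<in> E" using h1(1) zy' by (simp_all add: insert_commute)
          show False using no_sq[OF zy h2(1) h1(2) h2(2)] tz yy' by blast
        qed
      qed
      then show ?thesis ..
    qed
  qed
qed

lemma leaf_mate:
  assumes "l \<in> V" "sdeg E l = 1" "k \<in> {1..4}"
  shows "\<exists>x'. x' \<in> V \<times> {1..4} \<and> fv x' = fv (l,k) \<and> snd x' mod 2 \<noteq> k mod 2"
proof -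
  have "k = 1 \<or> k = 2 \<or> k = 3 \<or> k = 4" using assms(3) by auto
  then show ?thesis
  proof (elim disjE)
    assume "k = 1" then show ?thesis using leaf_mate_gen[OF assms(1,2), of 1 2 4 3] by (simp add: ext1_def)
  next
    assume "k = 2" then show ?thesis using leaf_mate_gen[OF assms(1,2), of 2 3 1 4] by (simp add: ext1_def)
  next
    assume "k = 3" then show ?thesis using leaf_mate_gen[OF assms(1,2), of 3 4 2 1] by (simp add: ext1_def)
  next
    assume "k = 4" then show ?thesis using leaf_mate_gen[OF assms(1,2), of 4 1 3 2] by (simp add: ext1_def)
  qed
qed

lemma fib_par:
  assumes "\<forall>x\<in>Fib y. snd x mod 2 = r" "{y,z} \<in> E"
  shows "\<forall>x\<in>Fib z. snd x mod 2 = r"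
proof
  fix x' assume x': "x' \<in> Fib z"
  then have x'V: "x' \<in> V \<times> {1..4}" and fx': "fv x' = z" unfolding Fib_def by auto
  have "{fv x', y} \<in> E" using assms(2) fx' by (simp add: insert_commute)
  then obtain x where x: "{x',x} \<in> QL" "fv x = y" using C2ex[OF x'V] by blast
  have xV: "x \<in> V \<times> {1..4}" using adj_verts x(1) by blast
  then have xF: "x \<in> Fib y" using x(2) unfolding Fib_def by simp
  obtain a i where ai: "x = (a,i)" by (cases x)
  obtain b j where bj: "x' = (b,j)" by (cases x')
  have pi: "i mod 2 = r" using assms(1) xF ai by auto
  show "snd x' mod 2 = r"
  proof (cases "sdeg E a = 1")
    case True
    have "a \<in> V" "i \<in> {1..4}" using xV ai by auto
    then obtain x'' where "x'' \<in> V \<times> {1..4}" "fv x'' = fv (a,i)" "snd x'' mod 2 \<noteq> i mod 2"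
      using leaf_mate True by blast
    then have "x'' \<in> Fib y" "snd x'' mod 2 \<noteq> r" using x(2) ai pi unfolding Fib_def by auto
    then show ?thesis using assms(1) by blast
  next
    case False
    have "{(a,i),(b,j)} \<in> QL" using x(1) ai bj by (simp add: insert_commute)
    then have "i mod 2 = j mod 2" using par_same False by blast
    then show ?thesis using pi bj by simp
  qed
qed

lemma no_mono: assumes "y \<in> V" shows "\<not> (\<forall>x\<in>Fib y. snd x mod 2 = r)"
proof
  assume h: "\<forall>x\<in>Fib y. snd x mod 2 = r"
  have all: "\<forall>x\<in>Fib z. snd x mod 2 = r" if "z \<in> V" for z
    using conn_induct[of y "\<lambda>z. \<forall>x\<in>Fib z. snd x mod 2 = r", OF assms h _ that] fib_par by blast
  define j :: nat where "j = (if r = 1 then 2 else 1)"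
  have jr: "j mod 2 \<noteq> r" unfolding j_def by auto
  have jV: "(y, j) \<in> V \<times> {1..4}" using assms unfolding j_def by auto
  then have "(y,j) \<in> Fib (fv (y,j))" unfolding Fib_def by simp
  moreover have "fv (y,j) \<in> V" using fv_V jV .
  ultimately show False using all jr by fastforce
qed

lemma finFib: "finite (Fib y)"
  unfolding Fib_def using finV by simp

lemma fib_le: assumes "{y,z} \<in> E" shows "card (Fib y) \<le> card (Fib z)"
proof -
  define g where "g x = (SOME x'. {x,x'} \<in> QL \<and> fv x' = z)" for x
  have g: "{x, g x} \<in> QL \<and> fv (g x) = z" if "x \<in> Fib y" for x
  proof -
    have "x \<in> V \<times> {1..4}" "fv x = y" using that unfolding Fib_def by auto
    then have "\<exists>x'. {x,x'} \<in> QL \<and> fv x' = z" using C2ex assms by blast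
    then show ?thesis unfolding g_def by (rule someI_ex)
  qed
  have "inj_on g (Fib y)"
  proof (rule inj_onI)
    fix x1 x2 assume x: "x1 \<in> Fib y" "x2 \<in> Fib y" "g x1 = g x2"
    have yz: "y \<noteq> z" using E_V assms by blast
    have "{g x1, x1} \<in> QL" using g[OF x(1)] by (simp add: insert_commute)
    moreover have "{g x1, x2} \<in> QL" using g[OF x(2)] x(3) by (simp add: insert_commute)
    moreover have "fv x1 = fv x2" "fv x1 \<noteq> fv (g x1)" using x g yz unfolding Fib_def by auto
    ultimately show "x1 = x2" using C2un by blast
  qed
  moreover have "g ` Fib y \<subseteq> Fib z"
  proof
    fix w assume "w \<in> g ` Fib y"
    then obtain x where "x \<in> Fib y" "w = g x" by blast
    then show "w \<in> Fib z" using g adj_verts unfolding Fib_def by blast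
  qed
  ultimately show ?thesis using card_inj_on_le finFib by blast
qed

lemma fib_eq: assumes "{y,z} \<in> E" shows "card (Fib y) = card (Fib z)"
  using fib_le[OF assms] fib_le[of z y] assms by (simp add: insert_commute)

lemma fib4: assumes "y \<in> V" shows "card (Fib y) = 4"
proof -
  have c: "card (Fib z) = card (Fib y)" if "z \<in> V" for z
    using conn_induct[of y "\<lambda>z. card (Fib z) = card (Fib y)", OF assms refl _ that] fib_eq by metis
  have U: "V \<times> {1..4} = (\<Union>z\<in>V. Fib z)" unfolding Fib_def using fv_V by auto
  have "card (\<Union>z\<in>V. Fib z) = (\<Sum>z\<in>V. card (Fib z))"
    by (rule card_UN_disjoint) (auto simp: finV finFib Fib_def)
  also have "\<dots> = card V * card (Fib y)" using c by simp
  finally have "card (V \<times> {1..4::nat}) = card V * card (Fib y)" using U by simp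
  moreover have "card (V \<times> {1..4::nat}) = card V * 4" by (simp add: card_cartesian_product)
  ultimately have "card V * 4 = card V * card (Fib y)" by simp
  moreover have "card V > 0" using cardV by simp
  ultimately show ?thesis by simp
qed


lemma img_deg: assumes x: "(u,i) \<in> V \<times> {1..4}" and du: "sdeg E u \<ge> 2"
  shows "sdeg E (fv (u,i)) \<ge> 2"
proof (rule ccontr)
  assume "\<not> ?thesis"
  then have dw: "sdeg E (fv (u,i)) \<le> 1" by simp
  define w where "w = fv (u,i)"
  have wV: "w \<in> V" using fv_V x unfolding w_def .
  obtain y1 y2 where y: "y1 \<noteq> y2" "{(u,i),y1} \<in> QL" "{(u,i),y2} \<in> QL" "fv y1 = w" "fv y2 = w"
    using C3[OF x dw] unfolding w_def by blast
  have yV: "y1 \<in> V \<times> {1..4}" "y2 \<in> V \<times> {1..4}" using adj_verts y by blast+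
  have xF: "(u,i) \<in> Fib w" using x unfolding Fib_def w_def by simp
  have yF: "y1 \<in> Fib w" "y2 \<in> Fib w" using yV y unfolding Fib_def by auto
  have xy: "(u,i) \<noteq> y1" "(u,i) \<noteq> y2" using y adj_irrefl by blast+
  have c4: "card (Fib w) = 4" using fib4 wV .
  have c3: "card {(u,i),y1,y2} = 3" using xy y(1) by simp
  have "{(u,i),y1,y2} \<subseteq> Fib w" using xF yF by blast
  then have "{(u,i),y1,y2} \<noteq> Fib w" using c3 c4 by auto
  then obtain t where t: "t \<in> Fib w" "t \<notin> {(u,i),y1,y2}" using \<open>{(u,i),y1,y2} \<subseteq> Fib w\<close> by blast
  have sub: "{(u,i),y1,y2,t} \<subseteq> Fib w" using xF yF t by blast
  have "(u,i) \<noteq> t" "y1 \<noteq> t" "y2 \<noteq> t" using t(2) by auto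
  then have "card {(u,i),y1,y2,t} = 4" using xy y(1) by simp
  then have FW: "Fib w = {(u,i),y1,y2,t}" using card_subset_eq[OF finFib sub] c4 by simp
  have not12: "{y1,y2} \<notin> QL"
  proof
    assume h: "{y1,y2} \<in> QL"
    obtain a j where aj: "y1 = (a,j)" by (cases y1)
    obtain b k where bk: "y2 = (b,k)" by (cases y2)
    have "{(u,i),(a,j)} \<in> QL" "{(a,j),(b,k)} \<in> QL" "{(u,i),(b,k)} \<in> QL" using y(2,3) h aj bk by simp_all
    from q_no_tri[OF this] show False .
  qed
  have tadj: "{y,t} \<in> QL" if yy: "y \<in> Fib w" "{y,y'} \<notin> QL" "{y1,y2} = {y,y'}" for y y'
  proof -
    have "y \<in> V \<times> {1..4}" "fv y = w" using yy(1) unfolding Fib_def by auto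
    then obtain n1 n2 where n: "n1 \<noteq> n2" "{y,n1} \<in> QL" "{y,n2} \<in> QL" "fv n1 = w" "fv n2 = w"
      using C3[of y] dw unfolding w_def by auto
    have "n1 \<in> Fib w" "n2 \<in> Fib w" using n adj_verts unfolding Fib_def by blast+
    then have "n1 \<in> {(u,i),y,y',t}" "n2 \<in> {(u,i),y,y',t}" using FW yy(3) by auto
    moreover have "n1 \<noteq> y" "n2 \<noteq> y" using n adj_irrefl by blast+
    moreover have "n1 \<noteq> y'" "n2 \<noteq> y'" using n yy(2) by blast+
    ultimately have "n1 \<in> {(u,i),t}" "n2 \<in> {(u,i),t}" by auto
    then have "t = n1 \<or> t = n2" using n(1) by auto
    then show ?thesis using n by auto
  qed
  have t1: "{y1,t} \<in> QL" by (rule tadj[OF yF(1) not12 refl])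
  have not21: "{y2,y1} \<notin> QL" using not12 by (simp add: insert_commute)
  have t2: "{y2,t} \<in> QL" by (rule tadj[OF yF(2) not21 insert_commute])
  obtain a j where aj: "y1 = (a,j)" by (cases y1)
  obtain b k where bk: "y2 = (b,k)" by (cases y2)
  obtain c m where cm: "t = (c,m)" by (cases t)
  have nu: "sdeg E u \<noteq> 1" using du by simp
  have pj: "i mod 2 = j mod 2" using par_same[of u i a j] y(2) aj nu by simp
  have pk: "i mod 2 = k mod 2" using par_same[of u i b k] y(3) bk nu by simp
  show False
  proof (cases "m mod 2 = i mod 2")
    case True
    then have "\<forall>z\<in>Fib w. snd z mod 2 = i mod 2" using FW aj bk cm pj pk by auto
    then show False using no_mono wV by blast
  next
    case False
    have "a = c" using par_diff_same[of a j c m] t1 aj cm False pj by simp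
    moreover have "b = c" using par_diff_same[of b k c m] t2 bk cm False pk by simp
    ultimately have "j = k" using same_fst_nbrs[of u i a j k] y(2,3) aj bk nu by simp
    then show False using y(1) aj bk \<open>a = c\<close> \<open>b = c\<close> by simp
  qed
qed

end

theorem lemma18:
  fixes V :: "'a set" and E :: "'a set set"
  assumes "is_tree V E"
    and "card V \<ge> 2"
    and "\<forall>u\<in>V. sdeg E u \<le> 3"
  shows "covers (Q4 V E) (T3 V E) \<and>
    (\<forall>fv fl. covering_projection (Q4 V E) (T3 V E) fv fl \<longrightarrow>
       (\<forall>u\<in>V. card {x\<in>verts (Q4 V E). fv x = u} = 4) \<and>
       (\<forall>u i. (u, i) \<in> verts (Q4 V E) \<and> relevant V E u \<longrightarrow> semi_simple (T3 V E) (fv (u, i))))"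
proof -
  have qt: "qtree V E" using assms by (intro qtree.intro)
  have c1: "covers (Q4 V E) (T3 V E)" unfolding covers_def using qtree.cov[OF qt] by blast
  have c2: "(\<forall>u\<in>V. card {x\<in>verts (Q4 V E). fv x = u} = 4) \<and>
       (\<forall>u i. (u, i) \<in> verts (Q4 V E) \<and> relevant V E u \<longrightarrow> semi_simple (T3 V E) (fv (u, i)))"
    if cp: "covering_projection (Q4 V E) (T3 V E) fv fl" for fv fl
  proof -
    have qc: "qcov V E fv fl" using qt cp by (intro qcov.intro qcov_axioms.intro)
    have A: "\<forall>u\<in>V. card {x\<in>verts (Q4 V E). fv x = u} = 4"
    proof
      fix u assume "u \<in> V"
      then have "card (qcov.Fib V fv u) = 4" using qcov.fib4[OF qc] by blast
      then show "card {x\<in>verts (Q4 V E). fv x = u} = 4" unfolding qcov.Fib_def[OF qc] by simp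
    qed
    have B: "\<forall>u i. (u, i) \<in> verts (Q4 V E) \<and> relevant V E u \<longrightarrow> semi_simple (T3 V E) (fv (u, i))"
    proof (intro allI impI)
      fix u i assume h: "(u, i) \<in> verts (Q4 V E) \<and> relevant V E u"
      then have x: "(u,i) \<in> V \<times> {1..4}" by simp
      have "sdeg E u \<ge> 2" using h unfolding relevant_def by auto
      then have d: "sdeg E (fv (u,i)) \<ge> 2" using qcov.img_deg[OF qc x] by blast
      have "fv (u,i) \<in> V" using qcov.fv_V[OF qc x] .
      then show "semi_simple (T3 V E) (fv (u, i))" using qtree.ss[OF qt] d by blast
    qed
    show ?thesis using A B ..
  qed
  show ?thesis using c1 c2 by blast
qed

end
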